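(* Let $G=(V,E,w_G)$ be any weighted undirected graph, let $\varepsilon\in(0,1)$, let $H=(V,E_H,w_H)$ be a $(1\pm\varepsilon)$-cut sparsifier of $G$, let $\beta\in(0,1)$ and let $\mathcal T$ be any $\beta$-balanced HC-tree on the vertex set $V$. Then $$(1-\varepsilon)\cdot\beta\cdot C_G(\mathcal T)\;\le\; C_H(\mathcal T)\;\le\;(1+\varepsilon)\cdot\frac{1}{\beta}\cdot C_G(\mathcal T).$$
   Context: Let $G=(V,E,w)$ be an undirected graph with nonnegative edge weights $w$. A hierarchical clustering tree (HC-tree) of $G$ is a rooted tree $\mathcal T$ whose leaves are in bijection with $V$. For a node $z$, $\mathcal T[z]$ is the subtree rooted at $z$ and $\mathrm{leaves}(\mathcal T[z])\subseteq V$ its set of leaves. For $u,v\in V$, $u\vee v$ denotes their lowest common ancestor in $\mathcal T$. The cost of $\mathcal T$ on $G$ is $C_G(\mathcal T)=\sum_{(u,v)\in E} w(u,v)\,|\mathrm{leaves}(\mathcal T[u\vee v])|$. For disjoint $A,B\subseteq V$, $w(A,B)$ denotes the total weight of edges with one endpoint in $A$ and the other in $B$, and $\bar A=V\setminus A$. If $\mathcal T$ is binary and $z$ is an internal node with children $z_1,z_2$, where $|\mathrm{leaves}(\mathcal T[z_1])|\le|\mathrm{leaves}(\mathcal T[z_2])|$, then $\mathrm{cut}(\mathcal T[z]):=(A,B)$ with $A=\mathrm{leaves}(\mathcal T[z_1])$, $B=\mathrm{leaves}(\mathcal T[z_2])$. For $0<\beta<1$, a pair of disjoint sets $(A,B)$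 is $\beta$-balanced if $\max\{|A|,|B|\}\le(1-\beta)|A\cup B|$; a binary HC-tree is $\beta$-balanced if $\mathrm{cut}(\mathcal T[z])$ is $\beta$-balanced for every internal node $z$. A weighted graph $H=(V,E_H,w_H)$ with $E_H\subseteq E$ is a $(1\pm\varepsilon)$-cut sparsifier of $G=(V,E,w_G)$ if for every nonempty $A\subsetneq V$: $(1-\varepsilon)w_G(A,\bar A)\le w_H(A,\bar A)\le(1+\varepsilon)w_G(A,\bar A)$. *)

theory Defs
  imports Complex_Main
begin

definition wgraph :: "'a set \<Rightarrow> 'a set set \<Rightarrow> ('a set \<Rightarrow> real) \<Rightarrow> bool" where
  "wgraph V E w \<longleftrightarrow> finite V \<and>
     (\<forall>e\<in>E. \<exists>u v. e = {u, v} \<and> u \<noteq> v \<and> u \<in> V \<and> v \<in> V) \<and>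
     (\<forall>e\<in>E. w e \<ge> 0)"

definition cut_weight :: "'a set set \<Rightarrow> ('a set \<Rightarrow> real) \<Rightarrow> 'a set \<Rightarrow> 'a set \<Rightarrow> real" where
  "cut_weight E w A B = (\<Sum>e\<in>{e\<in>E. \<exists>u v. e = {u, v} \<and> u \<in> A \<and> v \<in> B}. w e)"

definition cut_sparsifier ::
  "real \<Rightarrow> 'a set \<Rightarrow> 'a set set \<Rightarrow> ('a set \<Rightarrow> real) \<Rightarrow> 'a set set \<Rightarrow> ('a set \<Rightarrow> real) \<Rightarrow> bool" where
  "cut_sparsifier eps V E wG EH wH \<longleftrightarrow> wgraph V EH wH \<and> EH \<subseteq> E \<and>
     (\<forall>A. A \<noteq> {} \<and> A \<subset> V \<longrightarrow>
        (1 - eps) * cut_weight E wG A (V - A) \<le> cut_weight EH wH A (V - A) \<and>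
        cut_weight EH wH A (V - A) \<le> (1 + eps) * cut_weight E wG A (V - A))"

datatype 'a hctree = Leaf 'a | Node "'a hctree" "'a hctree"

fun leaf_list :: "'a hctree \<Rightarrow> 'a list" where
  "leaf_list (Leaf x) = [x]"
| "leaf_list (Node l r) = leaf_list l @ leaf_list r"

definition leaves :: "'a hctree \<Rightarrow> 'a set" where
  "leaves T = set (leaf_list T)"

definition hc_tree :: "'a set \<Rightarrow> 'a hctree \<Rightarrow> bool" where
  "hc_tree V T \<longleftrightarrow> distinct (leaf_list T) \<and> leaves T = V"

fun lca_tree :: "'a hctree \<Rightarrow> 'a set \<Rightarrow> 'a hctree" where
  "lca_tree (Leaf x) S = Leaf x"
| "lca_tree (Node l r) S =
     (if S \<subseteq> leaves l then lca_tree l S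
      else if S \<subseteq> leaves r then lca_tree r S
      else Node l r)"

definition lca :: "'a hctree \<Rightarrow> 'a \<Rightarrow> 'a \<Rightarrow> 'a hctree" where
  "lca T u v = lca_tree T {u, v}"

definition hc_cost :: "'a set set \<Rightarrow> ('a set \<Rightarrow> real) \<Rightarrow> 'a hctree \<Rightarrow> real" where
  "hc_cost E w T = (\<Sum>e\<in>E. w e * real (card (leaves (lca_tree T e))))"

fun internal_subtrees :: "'a hctree \<Rightarrow> 'a hctree set" where
  "internal_subtrees (Leaf x) = {}"
| "internal_subtrees (Node l r) = insert (Node l r) (internal_subtrees l \<union> internal_subtrees r)"

fun cut :: "'a hctree \<Rightarrow> 'a set \<times> 'a set" where
  "cut (Leaf x) = ({}, {x})"
| "cut (Node l r) = (if card (leaves l) \<le> card (leaves r) then (leaves l, leaves r)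
                     else (leaves r, leaves l))"

definition balanced_pair :: "real \<Rightarrow> 'a set \<times> 'a set \<Rightarrow> bool" where
  "balanced_pair \<beta> AB \<longleftrightarrow> (case AB of (A, B) \<Rightarrow>
     real (max (card A) (card B)) \<le> (1 - \<beta>) * real (card (A \<union> B)))"

definition balanced_tree :: "real \<Rightarrow> 'a hctree \<Rightarrow> bool" where
  "balanced_tree \<beta> T \<longleftrightarrow> (\<forall>z\<in>internal_subtrees T. balanced_pair \<beta> (cut z))"

end

theory Submission
  imports Defs
begin

fun li :: "'a hctree \<Rightarrow> real" where
  "li (Leaf x) = 1"
| "li (Node l r) = 0"

fun cc :: "('a set \<Rightarrow> real) \<Rightarrow> 'a hctree \<Rightarrow> real" where
  "cc f (Leaf x) = 0"
| "cc f (Node l r) = (real (card (leaves r)) + li l) * f (leaves l)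
     + (real (card (leaves l)) + li r) * f (leaves r) + cc f l + cc f r"

definition ind :: "'a set \<Rightarrow> 'a set \<Rightarrow> real" where
  "ind e A = (if \<exists>u v. e = {u, v} \<and> u \<in> A \<and> v \<notin> A then 1 else 0)"

lemma leaves_Node[simp]: "leaves (Node l r) = leaves l \<union> leaves r"
  by (simp add: leaves_def)

lemma leaves_Leaf[simp]: "leaves (Leaf x) = {x}"
  by (simp add: leaves_def)

lemma leaves_ne: "leaves t \<noteq> {}"
  by (induction t) auto

lemma finite_leaves[simp]: "finite (leaves t)"
  by (simp add: leaves_def)

lemma dist_Node: "distinct (leaf_list (Node l r)) \<Longrightarrow>
   distinct (leaf_list l) \<and> distinct (leaf_list r) \<and> leaves l \<inter> leaves r = {}"
  by (simp add: leaves_def)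

lemma card_Node: "distinct (leaf_list (Node l r)) \<Longrightarrow>
   card (leaves (Node l r)) = card (leaves l) + card (leaves r)"
proof -
  assume a: "distinct (leaf_list (Node l r))"
  have "leaves l \<inter> leaves r = {}" using dist_Node[OF a] by blast
  from card_Un_disjoint[OF finite_leaves finite_leaves this] show ?thesis
    by (simp only: leaves_Node)
qed

lemma ind_in: "u \<in> A \<Longrightarrow> v \<in> A \<Longrightarrow> ind {u,v} A = 0"
  unfolding ind_def by (auto simp: doubleton_eq_iff)

lemma ind_out: "u \<notin> A \<Longrightarrow> v \<notin> A \<Longrightarrow> ind {u,v} A = 0"
  unfolding ind_def by (auto simp: doubleton_eq_iff)

lemma ind_one: "u \<in> A \<Longrightarrow> v \<notin> A \<Longrightarrow> ind {u,v} A = 1"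
  unfolding ind_def by auto

lemma ind_one': "u \<in> A \<Longrightarrow> v \<notin> A \<Longrightarrow> ind {v,u} A = 1"
  unfolding ind_def by (auto simp: insert_commute)

lemma cc_zero: "u \<notin> leaves t \<Longrightarrow> v \<notin> leaves t \<Longrightarrow> cc (ind {u,v}) t = 0"
proof (induction t)
  case (Leaf x) then show ?case by simp
next
  case (Node l r)
  have "ind {u,v} (leaves l) = 0" "ind {u,v} (leaves r) = 0"
    using Node.prems by (simp_all add: ind_out)
  moreover have "cc (ind {u,v}) l = 0" "cc (ind {u,v}) r = 0"
    using Node.IH Node.prems by simp_all
  ultimately show ?case by simp
qed

lemma cc_one: "distinct (leaf_list t) \<Longrightarrow> u \<in> leaves t \<Longrightarrow> v \<notin> leaves t \<Longrightarrow>
   cc (ind {u, v}) t = real (card (leaves t)) - li t"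
proof (induction t)
  case (Leaf x) then show ?case by simp
next
  case (Node l r)
  note d = dist_Node[OF Node.prems(1)]
  note c = card_Node[OF Node.prems(1)]
  show ?case
  proof (cases "u \<in> leaves l")
    case True
    then have ur: "u \<notin> leaves r" using d by auto
    have vl: "v \<notin> leaves l" "v \<notin> leaves r" using Node.prems by auto
    have "ind {u, v} (leaves l) = 1" using True vl(1) by (rule ind_one)
    moreover have "ind {u, v} (leaves r) = 0" using ur vl(2) by (rule ind_out)
    moreover have "cc (ind {u,v}) r = 0" using ur vl(2) by (rule cc_zero)
    moreover have "cc (ind {u,v}) l = real (card (leaves l)) - li l"
      using Node.IH(1) True d vl by blast
    ultimately show ?thesis using c by simp
  next
    case False
    then have ur: "u \<in> leaves r" using Node.prems by auto
    have vl: "v \<notin> leaves l" "v \<notin> leaves r" using Node.prems by auto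
    have "ind {u, v} (leaves r) = 1" using ur vl(2) by (rule ind_one)
    moreover have "ind {u, v} (leaves l) = 0" using False vl(1) by (rule ind_out)
    moreover have "cc (ind {u,v}) l = 0" using False vl(1) by (rule cc_zero)
    moreover have "cc (ind {u,v}) r = real (card (leaves r)) - li r"
      using Node.IH(2) ur d vl by blast
    ultimately show ?thesis using c by simp
  qed
qed

lemma cc_two: "distinct (leaf_list t) \<Longrightarrow> u \<noteq> v \<Longrightarrow> u \<in> leaves t \<Longrightarrow> v \<in> leaves t \<Longrightarrow>
   cc (ind {u, v}) t = 2 * real (card (leaves (lca_tree t {u, v})))"
proof (induction t)
  case (Leaf x) then show ?case by simp
next
  case (Node l r)
  note d = dist_Node[OF Node.prems(1)]
  note c = card_Node[OF Node.prems(1)]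
  consider "u \<in> leaves l" "v \<in> leaves l" | "u \<in> leaves r" "v \<in> leaves r"
    | "u \<in> leaves l" "v \<in> leaves r" | "u \<in> leaves r" "v \<in> leaves l"
    using Node.prems by auto
  then show ?case
  proof cases
    case 1
    then have x: "u \<notin> leaves r" "v \<notin> leaves r" using d by auto
    have "ind {u, v} (leaves l) = 0" using 1 by (rule ind_in)
    moreover have "ind {u, v} (leaves r) = 0" using x by (rule ind_out)
    moreover have "cc (ind {u,v}) r = 0" using x by (rule cc_zero)
    moreover have "cc (ind {u,v}) l = 2 * real (card (leaves (lca_tree l {u, v})))"
      using Node.IH(1) 1 d Node.prems(2) by blast
    moreover have "lca_tree (Node l r) {u,v} = lca_tree l {u,v}" using 1 by simp
    ultimately show ?thesis by simp
  next
    case 2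
    then have x: "u \<notin> leaves l" "v \<notin> leaves l" using d by auto
    have "ind {u, v} (leaves r) = 0" using 2 by (rule ind_in)
    moreover have "ind {u, v} (leaves l) = 0" using x by (rule ind_out)
    moreover have "cc (ind {u,v}) l = 0" using x by (rule cc_zero)
    moreover have "cc (ind {u,v}) r = 2 * real (card (leaves (lca_tree r {u, v})))"
      using Node.IH(2) 2 d Node.prems(2) by blast
    moreover have "lca_tree (Node l r) {u,v} = lca_tree r {u,v}" using 2 x by simp
    ultimately show ?thesis by simp
  next
    case 3
    then have x: "u \<notin> leaves r" "v \<notin> leaves l" using d by auto
    have "ind {u, v} (leaves l) = 1" using 3(1) x(2) by (rule ind_one)
    moreover have "ind {u, v} (leaves r) = 1" using 3(2) x(1) by (rule ind_one')
    moreover have "cc (ind {u,v}) l = real (card (leaves l)) - li l"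
      using 3 d x by (intro cc_one) auto
    moreover have "cc (ind {v,u}) r = real (card (leaves r)) - li r"
      using 3 d x by (intro cc_one) auto
    moreover have "lca_tree (Node l r) {u,v} = Node l r" using 3 x by simp
    ultimately show ?thesis using c by (simp add: insert_commute)
  next
    case 4
    then have x: "u \<notin> leaves l" "v \<notin> leaves r" using d by auto
    have "ind {u, v} (leaves r) = 1" using 4(1) x(2) by (rule ind_one)
    moreover have "ind {u, v} (leaves l) = 1" using 4(2) x(1) by (rule ind_one')
    moreover have "cc (ind {v,u}) l = real (card (leaves l)) - li l"
      using 4 d x by (intro cc_one) auto
    moreover have "cc (ind {u,v}) r = real (card (leaves r)) - li r"
      using 4 d x by (intro cc_one) auto
    moreover have "lca_tree (Node l r) {u,v} = Node l r" using 4 x by simp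
    ultimately show ?thesis using c by (simp add: insert_commute)
  qed
qed

lemma cc_sum: "cc (\<lambda>A. \<Sum>e\<in>E. g e A) t = (\<Sum>e\<in>E. cc (g e) t)"
proof (induction t)
  case (Node l r)
  show ?case by (simp add: Node sum.distrib sum_distrib_left)
qed simp

lemma cc_scale: "cc (\<lambda>A. c * f A) t = c * cc f t"
  by (induction t) (simp_all add: distrib_left mult.left_commute)

lemma li_nonneg: "li t \<ge> 0" by (cases t) auto

lemma cc_mono: "distinct (leaf_list t) \<Longrightarrow>
   (\<And>A. A \<noteq> {} \<Longrightarrow> A \<subset> leaves t \<Longrightarrow> f A \<le> g A) \<Longrightarrow> cc f t \<le> cc g t"
proof (induction t)
  case (Leaf x) then show ?case by simp
next
  case (Node l r)
  note d = dist_Node[OF Node.prems(1)]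
  have sl: "leaves l \<subset> leaves (Node l r)" "leaves r \<subset> leaves (Node l r)"
    using d leaves_ne[of l] leaves_ne[of r] by auto
  have fl: "f (leaves l) \<le> g (leaves l)" "f (leaves r) \<le> g (leaves r)"
    using Node.prems(2)[OF leaves_ne sl(1)] Node.prems(2)[OF leaves_ne sl(2)] by auto
  have "cc f l \<le> cc g l"
  proof (rule Node.IH(1))
    show "distinct (leaf_list l)" using d by simp
    fix A assume a: "A \<noteq> {}" "A \<subset> leaves l"
    have "A \<subset> leaves (Node l r)" using a(2) sl(1) by (rule psubset_trans)
    then show "f A \<le> g A" using a(1) Node.prems(2) by simp
  qed
  moreover have "cc f r \<le> cc g r"
  proof (rule Node.IH(2))
    show "distinct (leaf_list r)" using d by simp
    fix A assume a: "A \<noteq> {}" "A \<subset> leaves r"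
    have "A \<subset> leaves (Node l r)" using a(2) sl(2) by (rule psubset_trans)
    then show "f A \<le> g A" using a(1) Node.prems(2) by simp
  qed
  moreover have "(real (card (leaves r)) + li l) * f (leaves l) \<le> (real (card (leaves r)) + li l) * g (leaves l)"
    using fl li_nonneg[of l] by (intro mult_left_mono) auto
  moreover have "(real (card (leaves l)) + li r) * f (leaves r) \<le> (real (card (leaves l)) + li r) * g (leaves r)"
    using fl li_nonneg[of r] by (intro mult_left_mono) auto
  ultimately show ?case by simp
qed

lemma cost_cc:
  assumes "wgraph V E w" "E' \<subseteq> E" "hc_tree V T"
  shows "2 * hc_cost E' w T = cc (\<lambda>A. cut_weight E' w A (V - A)) T"
proof -
  have fin: "finite E'"
  proof -
    have "E \<subseteq> Pow V" using assms(1) unfolding wgraph_def by auto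
    then show ?thesis using assms(1,2) unfolding wgraph_def by (meson finite_Pow_iff finite_subset)
  qed
  have d: "distinct (leaf_list T)" and lv: "leaves T = V" using assms(3) by (auto simp: hc_tree_def)
  have cw: "cut_weight E' w A (V - A) = (\<Sum>e\<in>E'. w e * ind e A)" for A
  proof -
    have "cut_weight E' w A (V - A) = (\<Sum>e\<in>E'. if \<exists>u v. e = {u, v} \<and> u \<in> A \<and> v \<in> V - A then w e else 0)"
      unfolding cut_weight_def using fin by (simp add: sum.inter_filter)
    also have "\<dots> = (\<Sum>e\<in>E'. w e * ind e A)"
    proof (rule sum.cong)
      fix e assume "e \<in> E'"
      then obtain a b where "e = {a,b}" "a \<in> V" "b \<in> V" using assms(1,2) unfolding wgraph_def by blast
      then have eq: "(\<exists>u v. e = {u, v} \<and> u \<in> A \<and> v \<in> V - A) = (\<exists>u v. e = {u, v} \<and> u \<in> A \<and> v \<notin> A)"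
        by (auto simp: doubleton_eq_iff)
      then show "(if \<exists>u v. e = {u, v} \<and> u \<in> A \<and> v \<in> V - A then w e else 0) = w e * ind e A"
        unfolding ind_def by (simp only: eq if_distrib[where f="(*) (w e)"] mult_1_right mult_zero_right)
    qed simp
    finally show ?thesis .
  qed
  have "cc (\<lambda>A. cut_weight E' w A (V - A)) T = (\<Sum>e\<in>E'. cc (\<lambda>A. w e * ind e A) T)"
    unfolding cw by (rule cc_sum)
  also have "\<dots> = (\<Sum>e\<in>E'. w e * (2 * real (card (leaves (lca_tree T e)))))"
  proof (rule sum.cong)
    fix e assume "e \<in> E'"
    then obtain a b where "e = {a,b}" "a \<noteq> b" "a \<in> V" "b \<in> V" using assms(1,2) unfolding wgraph_def by blast
    note ab = this
    have "cc (ind {a,b}) T = 2 * real (card (leaves (lca_tree T {a,b})))"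
      by (rule cc_two[OF d]) (use ab lv in auto)
    then show "cc (\<lambda>A. w e * ind e A) T = w e * (2 * real (card (leaves (lca_tree T e))))"
      unfolding cc_scale using ab(1) by simp
  qed simp
  also have "\<dots> = 2 * hc_cost E' w T"
    unfolding hc_cost_def by (simp add: sum_distrib_left algebra_simps)
  finally show ?thesis by simp
qed

theorem theorem3p1:
  fixes V :: "'a set" and E EH :: "'a set set" and wG wH :: "'a set \<Rightarrow> real"
    and eps \<beta> :: real and T :: "'a hctree"
  assumes "wgraph V E wG"
    and "0 < eps" and "eps < 1"
    and "cut_sparsifier eps V E wG EH wH"
    and "0 < \<beta>" and "\<beta> < 1"
    and "hc_tree V T"
    and "balanced_tree \<beta> T"
  shows "(1 - eps) * \<beta> * hc_cost E wG T \<le> hc_cost EH wH T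
       \<and> hc_cost EH wH T \<le> (1 + eps) * (1 / \<beta>) * hc_cost E wG T"
proof -
  have sp: "wgraph V EH wH" "EH \<subseteq> E" and
    cuts: "\<And>A. A \<noteq> {} \<Longrightarrow> A \<subset> V \<Longrightarrow>
        (1 - eps) * cut_weight E wG A (V - A) \<le> cut_weight EH wH A (V - A) \<and>
        cut_weight EH wH A (V - A) \<le> (1 + eps) * cut_weight E wG A (V - A)"
    using assms(4) unfolding cut_sparsifier_def by auto
  have d: "distinct (leaf_list T)" and lv: "leaves T = V" using assms(7) by (auto simp: hc_tree_def)
  have G: "2 * hc_cost E wG T = cc (\<lambda>A. cut_weight E wG A (V - A)) T"
    using cost_cc[OF assms(1) order_refl assms(7)] .
  have H: "2 * hc_cost EH wH T = cc (\<lambda>A. cut_weight EH wH A (V - A)) T"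
    using cost_cc[OF sp(1) order_refl assms(7)] .
  have "cc (\<lambda>A. (1 - eps) * cut_weight E wG A (V - A)) T \<le> cc (\<lambda>A. cut_weight EH wH A (V - A)) T"
    by (rule cc_mono[OF d]) (use cuts lv in blast)
  then have "(1 - eps) * (2 * hc_cost E wG T) \<le> 2 * hc_cost EH wH T"
    by (simp only: cc_scale G H)
  then have L: "(1 - eps) * hc_cost E wG T \<le> hc_cost EH wH T" by simp
  have "cc (\<lambda>A. cut_weight EH wH A (V - A)) T \<le> cc (\<lambda>A. (1 + eps) * cut_weight E wG A (V - A)) T"
    by (rule cc_mono[OF d]) (use cuts lv in blast)
  then have "2 * hc_cost EH wH T \<le> (1 + eps) * (2 * hc_cost E wG T)"
    by (simp only: cc_scale G H)
  then have U: "hc_cost EH wH T \<le> (1 + eps) * hc_cost E wG T" by simp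
  have nn: "hc_cost E wG T \<ge> 0"
    unfolding hc_cost_def
  proof (rule sum_nonneg)
    fix e assume "e \<in> E"
    then have "wG e \<ge> 0" using assms(1) unfolding wgraph_def by blast
    then show "0 \<le> wG e * real (card (leaves (lca_tree T e)))" by simp
  qed
  have "(1 - eps) * \<beta> * hc_cost E wG T = \<beta> * ((1 - eps) * hc_cost E wG T)" by simp
  also have "\<dots> \<le> (1 - eps) * hc_cost E wG T"
    by (rule mult_left_le_one_le) (use assms(3,5,6) nn in auto)
  finally have "(1 - eps) * \<beta> * hc_cost E wG T \<le> (1 - eps) * hc_cost E wG T" .
  moreover have "(1 + eps) * hc_cost E wG T \<le> (1 + eps) * (1 / \<beta>) * hc_cost E wG T"
  proof -
    have "1 \<le> 1 / \<beta>" using assms(5,6) by simp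
    then have "hc_cost E wG T \<le> (1 / \<beta>) * hc_cost E wG T" using nn
      by (metis mult_1 mult_right_mono)
    then have "(1 + eps) * hc_cost E wG T \<le> (1 + eps) * ((1 / \<beta>) * hc_cost E wG T)"
      using assms(2) by (intro mult_left_mono) auto
    then show ?thesis by (simp only: mult.assoc)
  qed
  ultimately show ?thesis using L U by linarith
qed

end
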